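(* Let $D$ be an integer which is not a perfect square, let $p\neq 2$ be a prime with $p\mid D$ and $p^2\nmid D$, and let $l\geq 1$. Let $A,B\in\mathbb{Z}$ be such that $p^{l+1}$ divides none of $A$, $B$, $A-B$, $G(A,B)$. Then $S^{(D;A,B)}(\mathbb{Q}_p)\neq\emptyset$ if and only if the pair $(A \bmod p^{8l+1}, B \bmod p^{8l+1})$ lies in $\mathcal{R}_l(p)$.
   Context: $S^{(D;A,B)}\subset\mathbb{P}^4_{\mathbb{Q}}$ is defined by $Q_1(\mathbf{t})=Q_2(\mathbf{t})=0$ where $Q_1(\mathbf{t})=t_2^2-Dt_3^2-t_0t_1$ and $Q_2(\mathbf{t})=t_2^2-Dt_4^2-(t_0+At_1)(t_0+Bt_1)$. $G(A,B)=A^2-2AB+B^2-2A-2B+1$. For a prime $p$ and $l\geq 1$, $\mathcal{R}_l(p)$ is the set of pairs of residue classes $(A,B)$ modulo $p^{8l+1}$ such that $p^{l+1}$ divides none of $A,B,A-B,G(A,B)$ and the congruences $Q_1(\mathbf{t})\equiv Q_2(\mathbf{t})\equiv 0\pmod{p^{8l+1}}$ have a solution $\mathbf{t}\in(\mathbb{Z}/p^{8l+1}\mathbb{Z})^5$ whose components are not all divisible by $p$. *)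

theory Defs
  imports "HOL-Number_Theory.Number_Theory"
begin

definition Q1 :: "int \<Rightarrow> int \<Rightarrow> int \<Rightarrow> int \<Rightarrow> int \<Rightarrow> int \<Rightarrow> int" where
  "Q1 D t0 t1 t2 t3 t4 = t2^2 - D * t3^2 - t0 * t1"

definition Q2 :: "int \<Rightarrow> int \<Rightarrow> int \<Rightarrow> int \<Rightarrow> int \<Rightarrow> int \<Rightarrow> int \<Rightarrow> int \<Rightarrow> int" where
  "Q2 D A B t0 t1 t2 t3 t4 = t2^2 - D * t4^2 - (t0 + A * t1) * (t0 + B * t1)"

definition G :: "int \<Rightarrow> int \<Rightarrow> int" where
  "G A B = A^2 - 2*A*B + B^2 - 2*A - 2*B + 1"

text \<open>p-adic integers as coherent sequences of residues: x n is the residue modulo p^n.\<close>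
definition padic_int :: "int \<Rightarrow> (nat \<Rightarrow> int) \<Rightarrow> bool" where
  "padic_int p x \<longleftrightarrow> (\<forall>n. 0 \<le> x n \<and> x n < p^n) \<and> (\<forall>n. [x (Suc n) = x n] (mod p^n))"

text \<open>S^(D;A,B)(Q_p) is nonempty: there is a nonzero vector (t_0,...,t_4) of p-adic numbers
  with Q1 = Q2 = 0. Since the equations are homogeneous, denominators can be cleared, so
  this is expressed with p-adic integers t i (i < 5), the equations holding modulo every p^n.\<close>
definition has_Qp_point :: "int \<Rightarrow> int \<Rightarrow> int \<Rightarrow> int \<Rightarrow> bool" where
  "has_Qp_point p D A B \<longleftrightarrow>
     (\<exists>t :: nat \<Rightarrow> nat \<Rightarrow> int.
        (\<forall>i<5. padic_int p (t i)) \<and>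
        (\<exists>i<5. \<exists>n. t i n \<noteq> 0) \<and>
        (\<forall>n. [Q1 D (t 0 n) (t 1 n) (t 2 n) (t 3 n) (t 4 n) = 0] (mod p^n)) \<and>
        (\<forall>n. [Q2 D A B (t 0 n) (t 1 n) (t 2 n) (t 3 n) (t 4 n) = 0] (mod p^n)))"

text \<open>R_l(p): residue classes modulo p^(8l+1), represented by integers in [0, p^(8l+1)).\<close>
definition R_set :: "int \<Rightarrow> int \<Rightarrow> nat \<Rightarrow> (int \<times> int) set" where
  "R_set D p l = (let M = p^(8*l+1) in
     {(A, B). 0 \<le> A \<and> A < M \<and> 0 \<le> B \<and> B < M \<and>
        \<not> p^(l+1) dvd A \<and> \<not> p^(l+1) dvd B \<and> \<not> p^(l+1) dvd (A - B) \<and>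
        \<not> p^(l+1) dvd G A B \<and>
        (\<exists>t0 t1 t2 t3 t4. \<not> (p dvd t0 \<and> p dvd t1 \<and> p dvd t2 \<and> p dvd t3 \<and> p dvd t4) \<and>
           [Q1 D t0 t1 t2 t3 t4 = 0] (mod M) \<and> [Q2 D A B t0 t1 t2 t3 t4 = 0] (mod M))})"

end

theory Submission
  imports Defs
begin

lemma pdm: "prime (p::int) \<Longrightarrow> x \<noteq> 0 \<Longrightarrow> p ^ n dvd x \<longleftrightarrow> n \<le> multiplicity p (x::int)"
  by (rule power_dvd_iff_le_multiplicity) auto

lemma vsplit:
  fixes p x y :: int
  assumes p: "prime p" and d: "p^(m+n) dvd x*y" and y: "\<not> p^(Suc n) dvd y"
  shows "p^m dvd x"
proof (cases "x = 0")
  case True then show ?thesis by simp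
next
  case False
  have y0: "y \<noteq> 0" using y by auto
  have "multiplicity p (x*y) = multiplicity p x + multiplicity p y"
    using p False y0 by (intro prime_elem_multiplicity_mult_distrib) auto
  moreover have "m+n \<le> multiplicity p (x*y)" using d pdm[OF p, of "x*y" "m+n"] False y0 by simp
  moreover have "\<not> Suc n \<le> multiplicity p y" using y pdm[OF p, of y "Suc n"] y0 by simp
  ultimately have "m \<le> multiplicity p x" by linarith
  then show ?thesis using pdm[OF p, of x m] False by simp
qed

lemma vsq:
  fixes p x y :: int
  assumes p: "prime p" and d: "p^(2*m) dvd x*y"
  shows "p^m dvd x \<or> p^m dvd y"
proof (cases "x = 0 \<or> y = 0")
  case True then show ?thesis by auto
next
  case False
  have "multiplicity p (x*y) = multiplicity p x + multiplicity p y"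
    using p False by (intro prime_elem_multiplicity_mult_distrib) auto
  moreover have "2*m \<le> multiplicity p (x*y)" using d pdm[OF p, of "x*y" "2*m"] False by simp
  ultimately have "m \<le> multiplicity p x \<or> m \<le> multiplicity p y" by linarith
  then show ?thesis using pdm[OF p, of x m] pdm[OF p, of y m] False by blast
qed

lemma dvd_coprime2:
  fixes p x :: int
  assumes "prime p" "p \<noteq> 2" "p^n dvd 2*x"
  shows "p^n dvd x"
proof -
  have "\<not> p dvd 2"
  proof
    assume "p dvd 2"
    then have "p \<le> 2" using zdvd_imp_le[of p 2] by linarith
    moreover have "p \<ge> 2" using assms(1) prime_ge_2_int by blast
    ultimately show False using assms(2) by linarith
  qed
  then have "coprime p 2" using assms(1) prime_imp_coprime by blast
  then have c: "coprime (p^n) 2" using coprime_power_left_iff by blast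
  have "p^n dvd x*2" using assms(3) by (simp add: mult.commute)
  then show ?thesis using coprime_dvd_mult_left_iff[OF c, of x] by simp
qed

definition jac :: "int \<Rightarrow> int \<Rightarrow> int \<Rightarrow> int \<Rightarrow> int \<Rightarrow> int \<Rightarrow> int \<Rightarrow> int \<Rightarrow> int \<Rightarrow> int \<Rightarrow> int \<Rightarrow> int \<Rightarrow> int" where
  "jac a1 b1 c1 d1 e1 a2 b2 c2 d2 e2 u v =
     (2*a1*u + b1*v + d1) * (b2*u + 2*c2*v + e2) - (b1*u + 2*c1*v + e1) * (2*a2*u + b2*v + d2)"

lemma jac_cong:
  assumes "[u' = u] (mod m)" "[v' = v] (mod m)"
  shows "[jac a1 b1 c1 d1 e1 a2 b2 c2 d2 e2 u' v' = jac a1 b1 c1 d1 e1 a2 b2 c2 d2 e2 u v] (mod m)"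
  unfolding jac_def using assms
  by (intro cong_diff cong_mult cong_add cong_refl) auto

lemma hensel_step:
  fixes p u v :: int and k e :: nat
  assumes p: "prime p"
  and F1: "\<And>u v. F1 u v = a1*u^2 + b1*u*v + c1*v^2 + d1*u + e1*v + f1"
  and F2: "\<And>u v. F2 u v = a2*u^2 + b2*u*v + c2*v^2 + d2*u + e2*v + f2"
  and k: "2*e+1 \<le> k"
  and J1: "p^e dvd jac a1 b1 c1 d1 e1 a2 b2 c2 d2 e2 u v"
  and J2: "\<not> p^(e+1) dvd jac a1 b1 c1 d1 e1 a2 b2 c2 d2 e2 u v"
  and c1: "[F1 u v = 0] (mod p^k)" and c2: "[F2 u v = 0] (mod p^k)"
  shows "\<exists>u' v'. [u' = u] (mod p^(k-e)) \<and> [v' = v] (mod p^(k-e)) \<and>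
     [F1 u' v' = 0] (mod p^(Suc k)) \<and> [F2 u' v' = 0] (mod p^(Suc k))"
proof -
  define J where "J = jac a1 b1 c1 d1 e1 a2 b2 c2 d2 e2 u v"
  obtain w1 where w1: "F1 u v = p^k * w1" using c1 by (auto simp: cong_0_iff)
  obtain w2 where w2: "F2 u v = p^k * w2" using c2 by (auto simp: cong_0_iff)
  obtain j where j: "J = p^e * j" using J1 J_def by auto
  have "\<not> p dvd j"
  proof
    assume "p dvd j"
    then have "p^(e+1) dvd J" using j by (simp add: mult_dvd_mono)
    then show False using J2 J_def by simp
  qed
  then have "coprime j p" using p prime_imp_coprime coprime_commute by blast
  then obtain ji where ji: "[j * ji = 1] (mod p)" using cong_solve_coprime_int by blast
  then have "p dvd (1 - j*ji)"
    by (metis cong_iff_dvd_diff cong_sym)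
  define q where "q = p^(k-e)"
  have "k - e + e = k" using k by simp
  then have qe: "q * p^e = p^k" unfolding q_def power_add[symmetric] by simp
  define Fu1 where "Fu1 = 2*a1*u + b1*v + d1"
  define Fv1 where "Fv1 = b1*u + 2*c1*v + e1"
  define Fu2 where "Fu2 = 2*a2*u + b2*v + d2"
  define Fv2 where "Fv2 = b2*u + 2*c2*v + e2"
  have JJ: "J = Fu1*Fv2 - Fv1*Fu2" unfolding J_def jac_def Fu1_def Fv1_def Fu2_def Fv2_def by simp
  define H where "H = -(ji * (Fv2*w1 - Fv1*w2))"
  define K where "K = -(ji * (Fu1*w2 - Fu2*w1))"
  have L1: "Fu1*H + Fv1*K = -(ji*J*w1)" unfolding H_def K_def JJ by (simp add: algebra_simps)
  have L2: "Fu2*H + Fv2*K = -(ji*J*w2)" unfolding H_def K_def JJ by (simp add: algebra_simps)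
  have T1: "F1 (u + q*H) (v + q*K) = F1 u v + q*(Fu1*H + Fv1*K) + q^2*(a1*H^2 + b1*H*K + c1*K^2)"
    unfolding F1 Fu1_def Fv1_def by (simp add: algebra_simps power2_eq_square)
  have T2: "F2 (u + q*H) (v + q*K) = F2 u v + q*(Fu2*H + Fv2*K) + q^2*(a2*H^2 + b2*H*K + c2*K^2)"
    unfolding F2 Fu2_def Fv2_def by (simp add: algebra_simps power2_eq_square)
  have qJ: "q*J = p^k * j" using qe j by (simp add: ac_simps)
  have E1: "F1 (u + q*H) (v + q*K) = p^k*w1*(1 - j*ji) + q^2*(a1*H^2 + b1*H*K + c1*K^2)"
  proof -
    have "q*(Fu1*H + Fv1*K) = -(ji*(q*J)*w1)" using L1 by (simp add: algebra_simps)
    also have "\<dots> = -(ji*(p^k*j)*w1)" using qJ by simp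
    finally show ?thesis using T1 w1 by (simp add: algebra_simps)
  qed
  have E2: "F2 (u + q*H) (v + q*K) = p^k*w2*(1 - j*ji) + q^2*(a2*H^2 + b2*H*K + c2*K^2)"
  proof -
    have "q*(Fu2*H + Fv2*K) = -(ji*(q*J)*w2)" using L2 by (simp add: algebra_simps)
    also have "\<dots> = -(ji*(p^k*j)*w2)" using qJ by simp
    finally show ?thesis using T2 w2 by (simp add: algebra_simps)
  qed
  have q2: "p^(Suc k) dvd q^2"
  proof -
    have "q^2 = p^(2*(k-e))" unfolding q_def by (metis power_mult mult.commute)
    moreover have "Suc k \<le> 2*(k-e)" using k by linarith
    ultimately show ?thesis by (metis le_imp_power_dvd)
  qed
  obtain r where r: "1 - j*ji = p*r" using \<open>p dvd (1 - j*ji)\<close> by (elim dvdE)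
  have d1: "p^(Suc k) dvd p^k*w1*(1 - j*ji)" for w1
  proof -
    have "p^k*w1*(1 - j*ji) = p^(Suc k)*(w1*r)" unfolding r by (simp add: ac_simps)
    then show ?thesis by (simp only: dvd_triv_left)
  qed
  show ?thesis
  proof (intro exI conjI)
    show "[u + q*H = u] (mod p^(k-e))" unfolding q_def by (simp add: cong_iff_dvd_diff)
    show "[v + q*K = v] (mod p^(k-e))" unfolding q_def by (simp add: cong_iff_dvd_diff)
    show "[F1 (u + q*H) (v + q*K) = 0] (mod p^(Suc k))" unfolding E1 cong_0_iff
      using d1 q2 by (simp add: dvd_add)
    show "[F2 (u + q*H) (v + q*K) = 0] (mod p^(Suc k))" unfolding E2 cong_0_iff
      using d1 q2 by (simp add: dvd_add)
  qed
qed

lemma hensel2: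
  fixes p u0 v0 :: int and e :: nat
  assumes p: "prime p"
  and F1: "\<And>u v. F1 u v = a1*u^2 + b1*u*v + c1*v^2 + d1*u + e1*v + f1"
  and F2: "\<And>u v. F2 u v = a2*u^2 + b2*u*v + c2*v^2 + d2*u + e2*v + f2"
  and J1: "p^e dvd jac a1 b1 c1 d1 e1 a2 b2 c2 d2 e2 u0 v0"
  and J2: "\<not> p^(e+1) dvd jac a1 b1 c1 d1 e1 a2 b2 c2 d2 e2 u0 v0"
  and c1: "[F1 u0 v0 = 0] (mod p^(2*e+1))" and c2: "[F2 u0 v0 = 0] (mod p^(2*e+1))"
  shows "\<exists>U V. U 0 = u0 \<and> V 0 = v0 \<and>
    (\<forall>n. [U (Suc n) = U n] (mod p^(n+e+1)) \<and> [V (Suc n) = V n] (mod p^(n+e+1)) \<and>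
         [F1 (U n) (V n) = 0] (mod p^(n+2*e+1)) \<and> [F2 (U n) (V n) = 0] (mod p^(n+2*e+1)))"
proof -
  define Jf where "Jf = jac a1 b1 c1 d1 e1 a2 b2 c2 d2 e2"
  define Inv where "Inv = (\<lambda>n (x::int\<times>int). p^e dvd Jf (fst x) (snd x) \<and> \<not> p^(e+1) dvd Jf (fst x) (snd x)
     \<and> [F1 (fst x) (snd x) = 0] (mod p^(n+2*e+1)) \<and> [F2 (fst x) (snd x) = 0] (mod p^(n+2*e+1)))"
  have step: "\<exists>y. Inv (Suc n) y \<and> [fst y = fst x] (mod p^(n+e+1)) \<and> [snd y = snd x] (mod p^(n+e+1))"
    if "Inv n x" for n x
  proof -
    obtain u v where x: "x = (u,v)" by fastforce
    have I: "p^e dvd Jf u v" "\<not> p^(e+1) dvd Jf u v" "[F1 u v = 0] (mod p^(n+2*e+1))"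
      "[F2 u v = 0] (mod p^(n+2*e+1))" using that x Inv_def by auto
    obtain u' v' where uv: "[u' = u] (mod p^(n+2*e+1-e))" "[v' = v] (mod p^(n+2*e+1-e))"
      "[F1 u' v' = 0] (mod p^(Suc (n+2*e+1)))" "[F2 u' v' = 0] (mod p^(Suc (n+2*e+1)))"
      using hensel_step[OF p F1 F2, of e "n+2*e+1" u v] I Jf_def by auto
    have ne: "n+2*e+1-e = n+e+1" by simp
    have uu: "[u' = u] (mod p^(n+e+1))" using uv(1) unfolding ne .
    have vv: "[v' = v] (mod p^(n+e+1))" using uv(2) unfolding ne .
    have jc: "[Jf u' v' = Jf u v] (mod p^(n+e+1))" unfolding Jf_def
      by (rule jac_cong[OF uu vv])
    have dv: "p^(e+1) dvd p^(n+e+1)" by (simp add: le_imp_power_dvd)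
    have dv': "p^e dvd p^(n+e+1)" by (simp add: le_imp_power_dvd)
    have "[Jf u' v' = Jf u v] (mod p^(e+1))" using jc dv cong_dvd_modulus by blast
    then have a: "\<not> p^(e+1) dvd Jf u' v'" using I(2) cong_dvd_iff by blast
    have "[Jf u' v' = Jf u v] (mod p^e)" using jc dv' cong_dvd_modulus by blast
    then have b: "p^e dvd Jf u' v'" using I(1) cong_dvd_iff by blast
    have e3: "Suc n + 2*e + 1 = Suc (n+2*e+1)" by simp
    have "Inv (Suc n) (u',v')" unfolding Inv_def fst_conv snd_conv e3
      using a b uv(3,4) by blast
    then show ?thesis using uu vv x by auto
  qed
  define g where "g = (\<lambda>n x. SOME y. Inv (Suc n) y \<and> [fst y = fst x] (mod p^(n+e+1)) \<and> [snd y = snd x] (mod p^(n+e+1)))"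
  have g: "Inv (Suc n) (g n x) \<and> [fst (g n x) = fst x] (mod p^(n+e+1))
      \<and> [snd (g n x) = snd x] (mod p^(n+e+1))" if "Inv n x" for n x
    unfolding g_def by (rule someI_ex[OF step[OF that]])
  define S where "S = rec_nat (u0,v0) g"
  have S0: "S 0 = (u0,v0)" and SS: "S (Suc n) = g n (S n)" for n unfolding S_def by simp_all
  have inv: "Inv n (S n)" for n
  proof (induction n)
    case 0 show ?case unfolding S0 Inv_def Jf_def fst_conv snd_conv using J1 J2 c1 c2 by simp
  next
    case (Suc n) then show ?case unfolding SS using g by blast
  qed
  show ?thesis
  proof (intro exI conjI allI)
    fix n
    show "[fst (S (Suc n)) = fst (S n)] (mod p^(n+e+1))" unfolding SS using g[OF inv] by blast
    show "[snd (S (Suc n)) = snd (S n)] (mod p^(n+e+1))" unfolding SS using g[OF inv] by blast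
    show "[F1 (fst (S n)) (snd (S n)) = 0] (mod p^(n+2*e+1))" using inv[of n] unfolding Inv_def by blast
    show "[F2 (fst (S n)) (snd (S n)) = 0] (mod p^(n+2*e+1))" using inv[of n] unfolding Inv_def by blast
  qed (simp_all add: S0)
qed

lemma Q1_cong:
  assumes "[x0 = y0] (mod m)" "[x1 = y1] (mod m)" "[x2 = y2] (mod m)" "[x3 = y3] (mod m)" "[x4 = y4] (mod m)"
  shows "[Q1 D x0 x1 x2 x3 x4 = Q1 D y0 y1 y2 y3 y4] (mod m)"
  unfolding Q1_def using assms by (intro cong_diff cong_mult cong_pow cong_refl) auto

lemma Q2_cong:
  assumes "[A' = A] (mod m)" "[B' = B] (mod m)"
    "[x0 = y0] (mod m)" "[x1 = y1] (mod m)" "[x2 = y2] (mod m)" "[x3 = y3] (mod m)" "[x4 = y4] (mod m)"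
  shows "[Q2 D A' B' x0 x1 x2 x3 x4 = Q2 D A B y0 y1 y2 y3 y4] (mod m)"
  unfolding Q2_def using assms by (intro cong_diff cong_mult cong_add cong_pow cong_refl) auto

lemma G_cong:
  assumes "[A' = A] (mod m)" "[B' = B] (mod m)"
  shows "[G A' B' = G A B] (mod m)"
  unfolding G_def using assms by (intro cong_diff cong_mult cong_add cong_pow cong_refl) auto

lemma five: "(i::nat) < 5 \<longleftrightarrow> i = 0 \<or> i = 1 \<or> i = 2 \<or> i = 3 \<or> i = 4" by auto

lemma bridge:
  fixes p :: int and X :: "nat \<Rightarrow> nat \<Rightarrow> int"
  assumes p: "prime p"
  and coh: "\<And>n i. i < 5 \<Longrightarrow> [X (Suc n) i = X n i] (mod p^n)"
  and e1: "\<And>n. [Q1 D (X n 0) (X n 1) (X n 2) (X n 3) (X n 4) = 0] (mod p^n)"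
  and e2: "\<And>n. [Q2 D A B (X n 0) (X n 1) (X n 2) (X n 3) (X n 4) = 0] (mod p^n)"
  and i: "i < 5" and nz: "\<not> p dvd X 1 i"
  shows "has_Qp_point p D A B"
proof -
  have p0: "p > 0" using p prime_gt_0_int by blast
  define t where "t = (\<lambda>i n. X n i mod p^n)"
  have m: "[t i n = X n i] (mod p^n)" for i n unfolding t_def by simp
  have pad: "padic_int p (t i)" if ii: "i < 5" for i
    unfolding padic_int_def
  proof (intro conjI allI)
    fix n
    show "0 \<le> t i n" "t i n < p^n" unfolding t_def using p0 by simp_all
    have "[t i (Suc n) = X (Suc n) i] (mod p^n)"
      using m[of i "Suc n"] by (rule cong_dvd_modulus) (simp add: le_imp_power_dvd)
    also have "[X (Suc n) i = X n i] (mod p^n)" by (rule coh[OF ii])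
    also have "[X n i = t i n] (mod p^n)" using m by (rule cong_sym)
    finally show "[t i (Suc n) = t i n] (mod p^n)" .
  qed
  have nz': "t i 1 \<noteq> 0" unfolding t_def using nz by (simp add: dvd_eq_mod_eq_0)
  have q1: "[Q1 D (t 0 n) (t 1 n) (t 2 n) (t 3 n) (t 4 n) = 0] (mod p^n)" for n
    using Q1_cong[OF m m m m m] e1 cong_trans by blast
  have q2: "[Q2 D A B (t 0 n) (t 1 n) (t 2 n) (t 3 n) (t 4 n) = 0] (mod p^n)" for n
    using Q2_cong[OF cong_refl cong_refl m m m m m] e2 cong_trans by blast
  show ?thesis unfolding has_Qp_point_def
    using pad q1 q2 nz' i by blast
qed

lemma padic_coh:
  assumes p: "p > 0" and x: "padic_int p x" and nm: "n \<le> m"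
  shows "x m mod p^n = x n"
proof -
  have "[x m = x n] (mod p^n)" using nm
  proof (induction m rule: dec_induct)
    case base then show ?case by simp
  next
    case (step m)
    have "[x (Suc m) = x m] (mod p^m)" using x unfolding padic_int_def by blast
    then have "[x (Suc m) = x m] (mod p^n)" by (rule cong_dvd_modulus) (simp add: le_imp_power_dvd step.hyps)
    then show ?case using step.IH cong_trans by blast
  qed
  moreover have "x n mod p^n = x n" using x unfolding padic_int_def by (simp add: mod_pos_pos_trivial)
  ultimately show ?thesis unfolding cong_def by simp
qed

lemma Q1_scale: "Q1 D (m*x0) (m*x1) (m*x2) (m*x3) (m*x4) = m^2 * Q1 D x0 x1 x2 x3 x4"
  unfolding Q1_def by (simp add: algebra_simps power2_eq_square)
lemma Q2_scale: "Q2 D A B (m*x0) (m*x1) (m*x2) (m*x3) (m*x4) = m^2 * Q2 D A B x0 x1 x2 x3 x4"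
  unfolding Q2_def by (simp add: algebra_simps power2_eq_square)

lemma forward:
  fixes p :: int and N :: nat
  assumes p: "prime p" and h: "has_Qp_point p D A B"
  shows "\<exists>t0 t1 t2 t3 t4. \<not> (p dvd t0 \<and> p dvd t1 \<and> p dvd t2 \<and> p dvd t3 \<and> p dvd t4) \<and>
           [Q1 D t0 t1 t2 t3 t4 = 0] (mod p^N) \<and> [Q2 D A B t0 t1 t2 t3 t4 = 0] (mod p^N)"
proof -
  have p0: "p > 0" using p prime_gt_0_int by blast
  obtain t :: "nat \<Rightarrow> nat \<Rightarrow> int" where pad: "\<And>i. i < 5 \<Longrightarrow> padic_int p (t i)"
    and nz: "\<exists>i<5. \<exists>n. t i n \<noteq> 0"
    and e1: "\<And>n. [Q1 D (t 0 n) (t 1 n) (t 2 n) (t 3 n) (t 4 n) = 0] (mod p^n)"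
    and e2: "\<And>n. [Q2 D A B (t 0 n) (t 1 n) (t 2 n) (t 3 n) (t 4 n) = 0] (mod p^n)"
    using h unfolding has_Qp_point_def by blast
  obtain i0 n0 where i0: "i0 < 5" and n0: "t i0 n0 \<noteq> 0" using nz by blast
  define L where "L = N + 2*n0"
  define y where "y = (\<lambda>i. t i L)"
  have "y i0 mod p^n0 = t i0 n0" unfolding y_def L_def using padic_coh[OF p0 pad[OF i0]] by simp
  then have ny: "\<not> p^n0 dvd y i0" using n0 by (simp add: dvd_eq_mod_eq_0)
  define P where "P = (\<lambda>k. \<forall>i<5. p^k dvd y i)"
  have P0: "P 0" unfolding P_def by simp
  have Pn: "\<not> P n0" unfolding P_def using ny i0 by blast
  define m where "m = (LEAST k. \<not> P k)"
  have m1: "\<not> P m" unfolding m_def using Pn by (rule LeastI)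
  have m2: "m \<le> n0" unfolding m_def using Pn by (rule Least_le)
  have m0: "m \<noteq> 0" using m1 P0 by (cases m) auto
  define k where "k = m - 1"
  have "k < m" using m0 unfolding k_def by simp
  then have "\<not> \<not> P k" unfolding m_def by (rule not_less_Least)
  then have Pk: "P k" by simp
  have Pk1: "\<not> P (Suc k)" using m1 m0 unfolding k_def by simp
  have kn: "k < n0" using m2 m0 unfolding k_def by simp
  define z where "z = (\<lambda>i. y i div p^k)"
  have yz: "y i = p^k * z i" if "i < 5" for i using Pk that unfolding P_def z_def by simp
  have Q1y: "Q1 D (y 0) (y 1) (y 2) (y 3) (y 4) = (p^k)^2 * Q1 D (z 0) (z 1) (z 2) (z 3) (z 4)"
    using yz[of 0] yz[of 1] yz[of 2] yz[of 3] yz[of 4] Q1_scale by simp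
  have Q2y: "Q2 D A B (y 0) (y 1) (y 2) (y 3) (y 4) = (p^k)^2 * Q2 D A B (z 0) (z 1) (z 2) (z 3) (z 4)"
    using yz[of 0] yz[of 1] yz[of 2] yz[of 3] yz[of 4] Q2_scale by simp
  have pw: "p^L = (p^k)^2 * p^(L - 2*k)"
    using kn unfolding L_def by (simp add: power_add[symmetric] power_mult[symmetric] mult.commute)
  have NL: "p^N dvd p^(L - 2*k)" using kn unfolding L_def by (simp add: le_imp_power_dvd)
  have pk0: "(p^k)^2 \<noteq> 0" using p0 by simp
  have r1: "p^N dvd Q1 D (z 0) (z 1) (z 2) (z 3) (z 4)"
  proof -
    have "p^L dvd (p^k)^2 * Q1 D (z 0) (z 1) (z 2) (z 3) (z 4)"
      using e1[of L] Q1y unfolding y_def cong_0_iff by simp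
    then have "p^(L - 2*k) dvd Q1 D (z 0) (z 1) (z 2) (z 3) (z 4)" unfolding pw using pk0 p0 by simp
    then show ?thesis using NL dvd_trans by blast
  qed
  have r2: "p^N dvd Q2 D A B (z 0) (z 1) (z 2) (z 3) (z 4)"
  proof -
    have "p^L dvd (p^k)^2 * Q2 D A B (z 0) (z 1) (z 2) (z 3) (z 4)"
      using e2[of L] Q2y unfolding y_def cong_0_iff by simp
    then have "p^(L - 2*k) dvd Q2 D A B (z 0) (z 1) (z 2) (z 3) (z 4)" unfolding pw using pk0 p0 by simp
    then show ?thesis using NL dvd_trans by blast
  qed
  obtain i where i: "i < 5" "\<not> p^(Suc k) dvd y i" using Pk1 unfolding P_def by blast
  have "\<not> p dvd z i"
  proof
    assume "p dvd z i"
    then have "p^k * p dvd p^k * z i" by simp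
    then show False using i yz[OF i(1)] by (simp add: mult.commute)
  qed
  then have prim: "\<not> (p dvd z 0 \<and> p dvd z 1 \<and> p dvd z 2 \<and> p dvd z 3 \<and> p dvd z 4)"
    using i(1) unfolding five by auto
  show ?thesis using prim r1 r2 unfolding cong_0_iff by blast
qed

lemma dvd_pow_le: "m \<le> n \<Longrightarrow> (p::int)^n dvd x \<Longrightarrow> p^m dvd x"
  using le_imp_power_dvd dvd_trans by blast

lemma key:
  fixes p D A B a b c d f :: int and l :: nat
  assumes p: "prime p" and p2: "p \<noteq> 2" and pD: "p dvd D" and pD2: "\<not> p^2 dvd D" and l: "l \<ge> 1"
    and nA: "\<not> p^(l+1) dvd A" and nB: "\<not> p^(l+1) dvd B" and nAB: "\<not> p^(l+1) dvd (A - B)"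
    and nG: "\<not> p^(l+1) dvd G A B"
    and prim: "\<not> (p dvd a \<and> p dvd b \<and> p dvd c \<and> p dvd d \<and> p dvd f)"
    and q1: "p^(8*l+1) dvd Q1 D a b c d f" and q2: "p^(8*l+1) dvd Q2 D A B a b c d f"
  shows "\<not> p^(4*l+1) dvd 2*(A*B*b^2 - a^2) \<or>
         \<not> p^(4*l+1) dvd 2*c*(2*a + (A+B-1)*b) \<or>
         \<not> p^(4*l+1) dvd 2*c*((A+B-1)*a + 2*A*B*b) \<or>
         \<not> p^(4*l+1) dvd 4*D*c*d \<or>
         \<not> p^(4*l+1) dvd 4*D*c*f \<or>
         \<not> p^(4*l+1) dvd 2*D*b*f \<or>
         \<not> p^(4*l+1) dvd 2*D*a*f"
proof (rule ccontr)
  assume "\<not> ?thesis"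
  then have H: "p^(4*l+1) dvd 2*(A*B*b^2 - a^2)" "p^(4*l+1) dvd 2*(c*(2*a + (A+B-1)*b))"
    "p^(4*l+1) dvd 2*(c*((A+B-1)*a + 2*A*B*b))" "p^(4*l+1) dvd 2*(2*(D*c*d))"
    "p^(4*l+1) dvd 2*(2*(D*c*f))" "p^(4*l+1) dvd 2*(D*b*f)" "p^(4*l+1) dvd 2*(D*a*f)"
    by (simp_all add: ac_simps)
  note dc = dvd_coprime2[OF p p2]
  have h01: "p^(4*l+1) dvd A*B*b^2 - a^2" using dc H(1) by blast
  have h02: "p^(4*l+1) dvd c*(2*a + (A+B-1)*b)" using dc H(2) by blast
  have h12: "p^(4*l+1) dvd c*((A+B-1)*a + 2*A*B*b)" using dc H(3) by blast
  have h23: "p^(4*l+1) dvd (D*d)*c" using dc[OF dc[OF H(4)]] by (simp add: ac_simps)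
  have h24: "p^(4*l+1) dvd (D*f)*c" using dc[OF dc[OF H(5)]] by (simp add: ac_simps)
  have h04: "p^(4*l+1) dvd (D*f)*b" using dc[OF H(6)] by (simp add: ac_simps)
  have h14: "p^(4*l+1) dvd (D*f)*a" using dc[OF H(7)] by (simp add: ac_simps)
  have Gid: "G A B = (A+B-1)^2 - 4*(A*B)" unfolding G_def by (simp add: algebra_simps power2_eq_square)
  have gb: "p^(4*l+1) dvd (c*b)*G A B"
  proof -
    have "(c*b)*G A B = (A+B-1)*(c*(2*a + (A+B-1)*b)) - 2*(c*((A+B-1)*a + 2*A*B*b))"
      unfolding Gid by (simp add: algebra_simps power2_eq_square)
    then show ?thesis using h02 h12 by (simp add: dvd_diff)
  qed
  have ga: "p^(4*l+1) dvd (c*a)*G A B"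
  proof -
    have "(c*a)*G A B = (A+B-1)*(c*((A+B-1)*a + 2*A*B*b)) - 2*A*B*(c*(2*a + (A+B-1)*b))"
      unfolding Gid by (simp add: algebra_simps power2_eq_square)
    then show ?thesis using h02 h12 by (simp add: dvd_diff)
  qed
  have e41: "4*l+1 = (3*l+1) + l" by simp
  have vG: "p^(4*l+1) dvd x * G A B \<Longrightarrow> p^(3*l+1) dvd x" for x
    using vsplit[OF p, of "3*l+1" l x "G A B"] nG by simp
  have unit: "p^(m+0) dvd x*u \<Longrightarrow> \<not> p dvd u \<Longrightarrow> p^m dvd x" for m x u
    using vsplit[OF p, of m 0 x u] by simp
  show False
  proof (cases "p dvd c")
    case False
    have "p^(3*l+1) dvd a * c" using vG[of "a*c"] ga by (simp add: ac_simps)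
    then have "p^(3*l+1) dvd a" using unit[of "3*l+1" a c] False by simp
    then have pa: "p dvd a" using dvd_pow_le[of 1 "3*l+1" p a] by simp
    have "p dvd Q1 D a b c d f" using q1 dvd_pow_le[of 1 "8*l+1" p] by simp
    moreover have "p dvd D*d^2 + a*b" using pD pa by simp
    ultimately have "p dvd c^2" unfolding Q1_def using dvd_add by fastforce
    then have "p dvd c" using p prime_dvd_power by blast
    then show False using False by simp
  next
    case pc: True
    show False
    proof (cases "p dvd a \<and> p dvd b")
      case True
      have p2d: "p^2 dvd p^(8*l+1)" using l by (simp add: le_imp_power_dvd)
      have sq: "p^2 dvd x*y" if "p dvd x" "p dvd y" for x y
        using that by (simp add: power2_eq_square mult_dvd_mono)
      have "p^2 dvd D*d^2"
      proof -
        have "p^2 dvd Q1 D a b c d f" using q1 p2d dvd_trans by blast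
        moreover have "p^2 dvd c*c" "p^2 dvd a*b" using sq pc True by auto
        moreover have "D*d^2 = c*c - a*b - Q1 D a b c d f" unfolding Q1_def by (simp add: power2_eq_square)
        ultimately show ?thesis by (simp add: dvd_diff)
      qed
      then have pd: "p dvd d"
        using vsplit[OF p, of 2 0 D "d^2"] pD2 p prime_dvd_power by auto
      have "p^2 dvd D*f^2"
      proof -
        have "p^2 dvd Q2 D A B a b c d f" using q2 p2d dvd_trans by blast
        moreover have "p^2 dvd c*c" "p^2 dvd (a+A*b)*(a+B*b)" using sq pc True by auto
        moreover have "D*f^2 = c*c - (a+A*b)*(a+B*b) - Q2 D A B a b c d f" unfolding Q2_def by (simp add: power2_eq_square)
        ultimately show ?thesis by (simp add: dvd_diff)
      qed
      then have pf: "p dvd f"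
        using vsplit[OF p, of 2 0 D "f^2"] pD2 p prime_dvd_power by auto
      show False using prim True pc pd pf by blast
    next
      case False
      then obtain u where u: "\<not> p dvd u" "p^(4*l+1) dvd (D*f)*u" "p^(4*l+1) dvd (c*u)*G A B"
        using h04 h14 ga gb by blast
      have "p^(4*l+1) dvd D*f" using unit[of "4*l+1" "D*f" u] u by simp
      then have pf: "p^(4*l) dvd f" using vsplit[OF p, of "4*l" 1 f D] pD2 by (simp add: ac_simps power2_eq_square)
      have "p^(3*l+1) dvd c*u" using vG u(3) by blast
      then have pc3: "p^(3*l+1) dvd c" using unit[of "3*l+1" c u] u by simp
      have c2: "p^(6*l+2) dvd c*c"
      proof -
        have "p^(3*l+1) * p^(3*l+1) dvd c*c" using pc3 by (simp add: mult_dvd_mono)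
        moreover have "6*l+2 = (3*l+1)+(3*l+1)" by simp
        ultimately show ?thesis by (metis power_add)
      qed
      have f2: "p^(8*l+1) dvd D*(f*f)"
      proof -
        have "p * (p^(4*l) * p^(4*l)) dvd D*(f*f)" using pD pf by (simp add: mult_dvd_mono)
        moreover have "8*l+1 = 1 + (4*l+4*l)" by simp
        ultimately show ?thesis by (metis power_add power_one_right)
      qed
      have le62: "6*l+2 \<le> 8*l+1" using l by simp
      have "p^(6*l+2) dvd (a+A*b)*(a+B*b)"
      proof -
        have "(a+A*b)*(a+B*b) = c*c - D*(f*f) - Q2 D A B a b c d f" unfolding Q2_def by (simp add: power2_eq_square)
        moreover have "p^(6*l+2) dvd D*(f*f)" using f2 dvd_pow_le[OF le62] by blast
        moreover have "p^(6*l+2) dvd Q2 D A B a b c d f" using q2 dvd_pow_le[OF le62] by blast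
        ultimately show ?thesis using c2 by (simp add: dvd_diff)
      qed
      then have "p^(3*l+1) dvd a+A*b \<or> p^(3*l+1) dvd a+B*b" using vsq[OF p, of "3*l+1"] by (simp add: algebra_simps)
      then show False
      proof
        have h01': "p^(3*l+1) dvd A*B*b^2 - a^2" using h01 dvd_pow_le[of "3*l+1" "4*l+1"] by simp
        assume h: "p^(3*l+1) dvd a+A*b"
        have pb: "\<not> p dvd b"
        proof
          assume "p dvd b"
          moreover have "p dvd a + A*b" using h dvd_pow_le[of 1 "3*l+1" p] by simp
          ultimately have "p dvd a" by (metis dvd_add_left_iff dvd_mult2 mult.commute)
          then show False using False \<open>p dvd b\<close> by blast
        qed
        have "A*(A-B)*b^2 = (a+A*b)*(A*b-a) - (A*B*b^2 - a^2)" by (simp add: algebra_simps power2_eq_square)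
        then have "p^(3*l+1) dvd (A*(A-B))*b^2" using h h01' by (simp add: dvd_diff)
        then have "p^(3*l+1) dvd A*(A-B)" using unit[of "3*l+1" "A*(A-B)" "b^2"] pb p prime_dvd_power by auto
        then have "p^(2*l+1) dvd A" using vsplit[OF p, of "2*l+1" l A "A-B"] nAB by simp
        then have "p^(l+1) dvd A" using dvd_pow_le[of "l+1" "2*l+1"] by simp
        then show False using nA by simp
      next
        have h01': "p^(3*l+1) dvd A*B*b^2 - a^2" using h01 dvd_pow_le[of "3*l+1" "4*l+1"] by simp
        assume h: "p^(3*l+1) dvd a+B*b"
        have pb: "\<not> p dvd b"
        proof
          assume "p dvd b"
          moreover have "p dvd a + B*b" using h dvd_pow_le[of 1 "3*l+1" p] by simp
          ultimately have "p dvd a" by (metis dvd_add_left_iff dvd_mult2 mult.commute)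
          then show False using False \<open>p dvd b\<close> by blast
        qed
        have "B*(B-A)*b^2 = (a+B*b)*(B*b-a) - (A*B*b^2 - a^2)" by (simp add: algebra_simps power2_eq_square)
        then have "p^(3*l+1) dvd (B*(B-A))*b^2" using h h01' by (simp add: dvd_diff)
        then have "p^(3*l+1) dvd B*(B-A)" using unit[of "3*l+1" "B*(B-A)" "b^2"] pb p prime_dvd_power by auto
        moreover have "\<not> p^(Suc l) dvd (B-A)" using nAB by (metis Suc_eq_plus1 dvd_minus_iff minus_diff_eq)
        ultimately have "p^(2*l+1) dvd B" using vsplit[OF p, of "2*l+1" l B "B-A"] by simp
        then have "p^(l+1) dvd B" using dvd_pow_le[of "l+1" "2*l+1"] by simp
        then show False using nB by simp
      qed
    qed
  qed
qed

lemma exval: "\<not> (p::int)^(k+1) dvd M \<Longrightarrow> \<exists>e\<le>k. p^e dvd M \<and> \<not> p^(e+1) dvd M"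
proof (induction k)
  case 0 then show ?case by auto
next
  case (Suc k)
  show ?case
  proof (cases "p^(k+1) dvd M")
    case True then show ?thesis using Suc.prems by (intro exI[of _ "Suc k"]) auto
  next
    case False then show ?thesis using Suc.IH by (meson le_Suc_eq)
  qed
qed

lemma lift_gen:
  fixes p ua va :: int and e :: nat and \<Phi> :: "int \<Rightarrow> int \<Rightarrow> int list"
  assumes p: "prime p"
  and F1: "\<And>u v. Q1 D (\<Phi> u v ! 0) (\<Phi> u v ! 1) (\<Phi> u v ! 2) (\<Phi> u v ! 3) (\<Phi> u v ! 4)
             = ka*u^2 + kb*u*v + kc*v^2 + kd*u + ke*v + kf"
  and F2: "\<And>u v. Q2 D A B (\<Phi> u v ! 0) (\<Phi> u v ! 1) (\<Phi> u v ! 2) (\<Phi> u v ! 3) (\<Phi> u v ! 4)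
             = ma*u^2 + mb*u*v + mc*v^2 + md*u + me*v + mf"
  and phic: "\<And>u v u' v' m i. i < 5 \<Longrightarrow> [u' = u] (mod m) \<Longrightarrow> [v' = v] (mod m) \<Longrightarrow> [\<Phi> u' v' ! i = \<Phi> u v ! i] (mod m)"
  and J1: "p^e dvd jac ka kb kc kd ke ma mb mc md me ua va"
  and J2: "\<not> p^(e+1) dvd jac ka kb kc kd ke ma mb mc md me ua va"
  and C1: "[Q1 D (\<Phi> ua va ! 0) (\<Phi> ua va ! 1) (\<Phi> ua va ! 2) (\<Phi> ua va ! 3) (\<Phi> ua va ! 4) = 0] (mod p^(2*e+1))"
  and C2: "[Q2 D A B (\<Phi> ua va ! 0) (\<Phi> ua va ! 1) (\<Phi> ua va ! 2) (\<Phi> ua va ! 3) (\<Phi> ua va ! 4) = 0] (mod p^(2*e+1))"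
  and nz: "i < 5" "\<not> p dvd \<Phi> ua va ! i"
  shows "has_Qp_point p D A B"
proof -
  define G1 where "G1 = (\<lambda>u v. Q1 D (\<Phi> u v ! 0) (\<Phi> u v ! 1) (\<Phi> u v ! 2) (\<Phi> u v ! 3) (\<Phi> u v ! 4))"
  define G2 where "G2 = (\<lambda>u v. Q2 D A B (\<Phi> u v ! 0) (\<Phi> u v ! 1) (\<Phi> u v ! 2) (\<Phi> u v ! 3) (\<Phi> u v ! 4))"
  obtain U V where U0: "U 0 = ua" and V0: "V 0 = va" and
    H: "\<And>n. [U (Suc n) = U n] (mod p^(n+e+1)) \<and> [V (Suc n) = V n] (mod p^(n+e+1)) \<and>
         [G1 (U n) (V n) = 0] (mod p^(n+2*e+1)) \<and> [G2 (U n) (V n) = 0] (mod p^(n+2*e+1))"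
    using hensel2[OF p, of G1 ka kb kc kd ke kf G2 ma mb mc md me mf e ua va] F1 F2 J1 J2 C1 C2
    unfolding G1_def G2_def by blast
  define X where "X = (\<lambda>n i. \<Phi> (U n) (V n) ! i)"
  have dv: "p^n dvd p^(n+k)" for n k by (simp add: le_imp_power_dvd)
  show ?thesis
  proof (rule bridge[OF p, of X D A B i])
    fix n i :: nat assume "i < 5"
    have "[U (Suc n) = U n] (mod p^n)" using H[of n] cong_dvd_modulus[OF _ dv[of n "e+1"]] by (simp add: add.assoc)
    moreover have "[V (Suc n) = V n] (mod p^n)" using H[of n] cong_dvd_modulus[OF _ dv[of n "e+1"]] by (simp add: add.assoc)
    ultimately show "[X (Suc n) i = X n i] (mod p^n)" unfolding X_def using phic \<open>i<5\<close> by blast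
  next
    fix n
    show "[Q1 D (X n 0) (X n 1) (X n 2) (X n 3) (X n 4) = 0] (mod p^n)"
      using H[of n] cong_dvd_modulus[OF _ dv[of n "2*e+1"]] unfolding X_def G1_def by (simp add: add.assoc)
    show "[Q2 D A B (X n 0) (X n 1) (X n 2) (X n 3) (X n 4) = 0] (mod p^n)"
      using H[of n] cong_dvd_modulus[OF _ dv[of n "2*e+1"]] unfolding X_def G2_def by (simp add: add.assoc)
  next
    show "i < 5" by (rule nz(1))
    have "[U 1 = U 0] (mod p)" using H[of 0] cong_dvd_modulus[OF _ dv[of 1 e]] by (simp add: add.commute)
    moreover have "[V 1 = V 0] (mod p)" using H[of 0] cong_dvd_modulus[OF _ dv[of 1 e]] by (simp add: add.commute)
    ultimately have "[X 1 i = X 0 i] (mod p)" unfolding X_def using phic nz(1) by blast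
    then show "\<not> p dvd X 1 i" using nz(2) U0 V0 unfolding X_def by (simp add: cong_dvd_iff)
  qed
qed

lemma case01:
  fixes p D A B a b c d f :: int and l :: nat
  assumes p: "prime p"
    and q1: "p^(8*l+1) dvd Q1 D a b c d f" and q2: "p^(8*l+1) dvd Q2 D A B a b c d f"
    and i: "i < 5" "\<not> p dvd [a,b,c,d,f] ! i"
    and nd: "\<not> p^(4*l+1) dvd 2*(A*B*b^2 - a^2)"
  shows "has_Qp_point p D A B"
proof -
  obtain e where e: "e \<le> 4*l" "p^e dvd 2*(A*B*b^2 - a^2)" "\<not> p^(e+1) dvd 2*(A*B*b^2 - a^2)"
    using exval[of p "4*l" "2*(A*B*b^2 - a^2)"] nd by blast
  have jq: "jac (0) (-1) (0) (0) (0) (-1) (-(A+B)) (-(A*B)) (0) (0) a b = 2*(A*B*b^2 - a^2)"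
    unfolding jac_def by (simp add: algebra_simps power2_eq_square)
  have J1: "p^e dvd jac (0) (-1) (0) (0) (0) (-1) (-(A+B)) (-(A*B)) (0) (0) a b" using e(2) jq by simp
  have J2: "\<not> p^(e+1) dvd jac (0) (-1) (0) (0) (0) (-1) (-(A+B)) (-(A*B)) (0) (0) a b" using e(3) jq by simp
  have le: "p^(2*e+1) dvd p^(8*l+1)" using e(1) by (simp add: le_imp_power_dvd)
  show ?thesis
  proof (rule lift_gen[OF p, where \<Phi>="\<lambda>u v. [u,v,c,d,f]" and ua="a" and va="b" and e=e and i=i and ka="0" and kb="-1" and kc="0" and kd="0" and ke="0" and kf="c^2-D*d^2" and ma="-1" and mb="-(A+B)" and mc="-(A*B)" and md="0" and me="0" and mf="c^2-D*f^2"])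
    show "\<And>u v. Q1 D ([u,v,c,d,f]!0) ([u,v,c,d,f]!1) ([u,v,c,d,f]!2) ([u,v,c,d,f]!3) ([u,v,c,d,f]!4) = 0*u^2 + (-1)*u*v + (0)*v^2 + (0)*u + (0)*v + (c^2-D*d^2)"
      by (simp add: Q1_def algebra_simps power2_eq_square)
    show "\<And>u v. Q2 D A B ([u,v,c,d,f]!0) ([u,v,c,d,f]!1) ([u,v,c,d,f]!2) ([u,v,c,d,f]!3) ([u,v,c,d,f]!4) = (-1)*u^2 + (-(A+B))*u*v + (-(A*B))*v^2 + (0)*u + (0)*v + (c^2-D*f^2)"
      by (simp add: Q2_def algebra_simps power2_eq_square)
  qed (use J1 J2 i le q1 q2 in \<open>auto simp: five cong_0_iff intro: dvd_trans\<close>)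
qed

lemma case02:
  fixes p D A B a b c d f :: int and l :: nat
  assumes p: "prime p"
    and q1: "p^(8*l+1) dvd Q1 D a b c d f" and q2: "p^(8*l+1) dvd Q2 D A B a b c d f"
    and i: "i < 5" "\<not> p dvd [a,b,c,d,f] ! i"
    and nd: "\<not> p^(4*l+1) dvd 2*c*(2*a + (A+B-1)*b)"
  shows "has_Qp_point p D A B"
proof -
  obtain e where e: "e \<le> 4*l" "p^e dvd 2*c*(2*a + (A+B-1)*b)" "\<not> p^(e+1) dvd 2*c*(2*a + (A+B-1)*b)"
    using exval[of p "4*l" "2*c*(2*a + (A+B-1)*b)"] nd by blast
  have jq: "jac (0) (0) (1) (-b) (0) (-1) (0) (1) (-(A+B)*b) (0) a c = 2*c*(2*a + (A+B-1)*b)"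
    unfolding jac_def by (simp add: algebra_simps power2_eq_square)
  have J1: "p^e dvd jac (0) (0) (1) (-b) (0) (-1) (0) (1) (-(A+B)*b) (0) a c" using e(2) jq by simp
  have J2: "\<not> p^(e+1) dvd jac (0) (0) (1) (-b) (0) (-1) (0) (1) (-(A+B)*b) (0) a c" using e(3) jq by simp
  have le: "p^(2*e+1) dvd p^(8*l+1)" using e(1) by (simp add: le_imp_power_dvd)
  show ?thesis
  proof (rule lift_gen[OF p, where \<Phi>="\<lambda>u v. [u,b,v,d,f]" and ua="a" and va="c" and e=e and i=i and ka="0" and kb="0" and kc="1" and kd="-b" and ke="0" and kf="-D*d^2" and ma="-1" and mb="0" and mc="1" and md="-(A+B)*b" and me="0" and mf="-D*f^2-A*B*b^2"])
    show "\<And>u v. Q1 D ([u,b,v,d,f]!0) ([u,b,v,d,f]!1) ([u,b,v,d,f]!2) ([u,b,v,d,f]!3) ([u,b,v,d,f]!4) = 0*u^2 + (0)*u*v + (1)*v^2 + (-b)*u + (0)*v + (-D*d^2)"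
      by (simp add: Q1_def algebra_simps power2_eq_square)
    show "\<And>u v. Q2 D A B ([u,b,v,d,f]!0) ([u,b,v,d,f]!1) ([u,b,v,d,f]!2) ([u,b,v,d,f]!3) ([u,b,v,d,f]!4) = (-1)*u^2 + (0)*u*v + (1)*v^2 + (-(A+B)*b)*u + (0)*v + (-D*f^2-A*B*b^2)"
      by (simp add: Q2_def algebra_simps power2_eq_square)
  qed (use J1 J2 i le q1 q2 in \<open>auto simp: five cong_0_iff intro: dvd_trans\<close>)
qed

lemma case12:
  fixes p D A B a b c d f :: int and l :: nat
  assumes p: "prime p"
    and q1: "p^(8*l+1) dvd Q1 D a b c d f" and q2: "p^(8*l+1) dvd Q2 D A B a b c d f"
    and i: "i < 5" "\<not> p dvd [a,b,c,d,f] ! i"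
    and nd: "\<not> p^(4*l+1) dvd 2*c*((A+B-1)*a + 2*A*B*b)"
  shows "has_Qp_point p D A B"
proof -
  obtain e where e: "e \<le> 4*l" "p^e dvd 2*c*((A+B-1)*a + 2*A*B*b)" "\<not> p^(e+1) dvd 2*c*((A+B-1)*a + 2*A*B*b)"
    using exval[of p "4*l" "2*c*((A+B-1)*a + 2*A*B*b)"] nd by blast
  have jq: "jac (0) (0) (1) (-a) (0) (-(A*B)) (0) (1) (-(A+B)*a) (0) b c = 2*c*((A+B-1)*a + 2*A*B*b)"
    unfolding jac_def by (simp add: algebra_simps power2_eq_square)
  have J1: "p^e dvd jac (0) (0) (1) (-a) (0) (-(A*B)) (0) (1) (-(A+B)*a) (0) b c" using e(2) jq by simp
  have J2: "\<not> p^(e+1) dvd jac (0) (0) (1) (-a) (0) (-(A*B)) (0) (1) (-(A+B)*a) (0) b c" using e(3) jq by simp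
  have le: "p^(2*e+1) dvd p^(8*l+1)" using e(1) by (simp add: le_imp_power_dvd)
  show ?thesis
  proof (rule lift_gen[OF p, where \<Phi>="\<lambda>u v. [a,u,v,d,f]" and ua="b" and va="c" and e=e and i=i and ka="0" and kb="0" and kc="1" and kd="-a" and ke="0" and kf="-D*d^2" and ma="-(A*B)" and mb="0" and mc="1" and md="-(A+B)*a" and me="0" and mf="-(a^2)-D*f^2"])
    show "\<And>u v. Q1 D ([a,u,v,d,f]!0) ([a,u,v,d,f]!1) ([a,u,v,d,f]!2) ([a,u,v,d,f]!3) ([a,u,v,d,f]!4) = 0*u^2 + (0)*u*v + (1)*v^2 + (-a)*u + (0)*v + (-D*d^2)"
      by (simp add: Q1_def algebra_simps power2_eq_square)
    show "\<And>u v. Q2 D A B ([a,u,v,d,f]!0) ([a,u,v,d,f]!1) ([a,u,v,d,f]!2) ([a,u,v,d,f]!3) ([a,u,v,d,f]!4) = (-(A*B))*u^2 + (0)*u*v + (1)*v^2 + (-(A+B)*a)*u + (0)*v + (-(a^2)-D*f^2)"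
      by (simp add: Q2_def algebra_simps power2_eq_square)
  qed (use J1 J2 i le q1 q2 in \<open>auto simp: five cong_0_iff intro: dvd_trans\<close>)
qed

lemma case23:
  fixes p D A B a b c d f :: int and l :: nat
  assumes p: "prime p"
    and q1: "p^(8*l+1) dvd Q1 D a b c d f" and q2: "p^(8*l+1) dvd Q2 D A B a b c d f"
    and i: "i < 5" "\<not> p dvd [a,b,c,d,f] ! i"
    and nd: "\<not> p^(4*l+1) dvd 4*D*c*d"
  shows "has_Qp_point p D A B"
proof -
  obtain e where e: "e \<le> 4*l" "p^e dvd 4*D*c*d" "\<not> p^(e+1) dvd 4*D*c*d"
    using exval[of p "4*l" "4*D*c*d"] nd by blast
  have jq: "jac (1) (0) (-D) (0) (0) (1) (0) (0) (0) (0) c d = 4*D*c*d"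
    unfolding jac_def by (simp add: algebra_simps power2_eq_square)
  have J1: "p^e dvd jac (1) (0) (-D) (0) (0) (1) (0) (0) (0) (0) c d" using e(2) jq by simp
  have J2: "\<not> p^(e+1) dvd jac (1) (0) (-D) (0) (0) (1) (0) (0) (0) (0) c d" using e(3) jq by simp
  have le: "p^(2*e+1) dvd p^(8*l+1)" using e(1) by (simp add: le_imp_power_dvd)
  show ?thesis
  proof (rule lift_gen[OF p, where \<Phi>="\<lambda>u v. [a,b,u,v,f]" and ua="c" and va="d" and e=e and i=i and ka="1" and kb="0" and kc="-D" and kd="0" and ke="0" and kf="-(a*b)" and ma="1" and mb="0" and mc="0" and md="0" and me="0" and mf="-D*f^2-(a+A*b)*(a+B*b)"])
    show "\<And>u v. Q1 D ([a,b,u,v,f]!0) ([a,b,u,v,f]!1) ([a,b,u,v,f]!2) ([a,b,u,v,f]!3) ([a,b,u,v,f]!4) = 1*u^2 + (0)*u*v + (-D)*v^2 + (0)*u + (0)*v + (-(a*b))"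
      by (simp add: Q1_def algebra_simps power2_eq_square)
    show "\<And>u v. Q2 D A B ([a,b,u,v,f]!0) ([a,b,u,v,f]!1) ([a,b,u,v,f]!2) ([a,b,u,v,f]!3) ([a,b,u,v,f]!4) = (1)*u^2 + (0)*u*v + (0)*v^2 + (0)*u + (0)*v + (-D*f^2-(a+A*b)*(a+B*b))"
      by (simp add: Q2_def algebra_simps power2_eq_square)
  qed (use J1 J2 i le q1 q2 in \<open>auto simp: five cong_0_iff intro: dvd_trans\<close>)
qed

lemma case24:
  fixes p D A B a b c d f :: int and l :: nat
  assumes p: "prime p"
    and q1: "p^(8*l+1) dvd Q1 D a b c d f" and q2: "p^(8*l+1) dvd Q2 D A B a b c d f"
    and i: "i < 5" "\<not> p dvd [a,b,c,d,f] ! i"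
    and nd: "\<not> p^(4*l+1) dvd 4*D*c*f"
  shows "has_Qp_point p D A B"
proof -
  obtain e where e: "e \<le> 4*l" "p^e dvd 4*D*c*f" "\<not> p^(e+1) dvd 4*D*c*f"
    using exval[of p "4*l" "4*D*c*f"] nd by blast
  have jq: "jac (1) (0) (0) (0) (0) (1) (0) (-D) (0) (0) c f = -(4*D*c*f)"
    unfolding jac_def by (simp add: algebra_simps power2_eq_square)
  have J1: "p^e dvd jac (1) (0) (0) (0) (0) (1) (0) (-D) (0) (0) c f" using e(2) jq by simp
  have J2: "\<not> p^(e+1) dvd jac (1) (0) (0) (0) (0) (1) (0) (-D) (0) (0) c f" using e(3) jq by simp
  have le: "p^(2*e+1) dvd p^(8*l+1)" using e(1) by (simp add: le_imp_power_dvd)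
  show ?thesis
  proof (rule lift_gen[OF p, where \<Phi>="\<lambda>u v. [a,b,u,d,v]" and ua="c" and va="f" and e=e and i=i and ka="1" and kb="0" and kc="0" and kd="0" and ke="0" and kf="-D*d^2-a*b" and ma="1" and mb="0" and mc="-D" and md="0" and me="0" and mf="-((a+A*b)*(a+B*b))"])
    show "\<And>u v. Q1 D ([a,b,u,d,v]!0) ([a,b,u,d,v]!1) ([a,b,u,d,v]!2) ([a,b,u,d,v]!3) ([a,b,u,d,v]!4) = 1*u^2 + (0)*u*v + (0)*v^2 + (0)*u + (0)*v + (-D*d^2-a*b)"
      by (simp add: Q1_def algebra_simps power2_eq_square)
    show "\<And>u v. Q2 D A B ([a,b,u,d,v]!0) ([a,b,u,d,v]!1) ([a,b,u,d,v]!2) ([a,b,u,d,v]!3) ([a,b,u,d,v]!4) = (1)*u^2 + (0)*u*v + (-D)*v^2 + (0)*u + (0)*v + (-((a+A*b)*(a+B*b)))"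
      by (simp add: Q2_def algebra_simps power2_eq_square)
  qed (use J1 J2 i le q1 q2 in \<open>auto simp: five cong_0_iff intro: dvd_trans\<close>)
qed

lemma case04:
  fixes p D A B a b c d f :: int and l :: nat
  assumes p: "prime p"
    and q1: "p^(8*l+1) dvd Q1 D a b c d f" and q2: "p^(8*l+1) dvd Q2 D A B a b c d f"
    and i: "i < 5" "\<not> p dvd [a,b,c,d,f] ! i"
    and nd: "\<not> p^(4*l+1) dvd 2*D*b*f"
  shows "has_Qp_point p D A B"
proof -
  obtain e where e: "e \<le> 4*l" "p^e dvd 2*D*b*f" "\<not> p^(e+1) dvd 2*D*b*f"
    using exval[of p "4*l" "2*D*b*f"] nd by blast
  have jq: "jac (0) (0) (0) (-b) (0) (-1) (0) (-D) (-(A+B)*b) (0) a f = 2*D*b*f"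
    unfolding jac_def by (simp add: algebra_simps power2_eq_square)
  have J1: "p^e dvd jac (0) (0) (0) (-b) (0) (-1) (0) (-D) (-(A+B)*b) (0) a f" using e(2) jq by simp
  have J2: "\<not> p^(e+1) dvd jac (0) (0) (0) (-b) (0) (-1) (0) (-D) (-(A+B)*b) (0) a f" using e(3) jq by simp
  have le: "p^(2*e+1) dvd p^(8*l+1)" using e(1) by (simp add: le_imp_power_dvd)
  show ?thesis
  proof (rule lift_gen[OF p, where \<Phi>="\<lambda>u v. [u,b,c,d,v]" and ua="a" and va="f" and e=e and i=i and ka="0" and kb="0" and kc="0" and kd="-b" and ke="0" and kf="c^2-D*d^2" and ma="-1" and mb="0" and mc="-D" and md="-(A+B)*b" and me="0" and mf="c^2-A*B*b^2"])
    show "\<And>u v. Q1 D ([u,b,c,d,v]!0) ([u,b,c,d,v]!1) ([u,b,c,d,v]!2) ([u,b,c,d,v]!3) ([u,b,c,d,v]!4) = 0*u^2 + (0)*u*v + (0)*v^2 + (-b)*u + (0)*v + (c^2-D*d^2)"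
      by (simp add: Q1_def algebra_simps power2_eq_square)
    show "\<And>u v. Q2 D A B ([u,b,c,d,v]!0) ([u,b,c,d,v]!1) ([u,b,c,d,v]!2) ([u,b,c,d,v]!3) ([u,b,c,d,v]!4) = (-1)*u^2 + (0)*u*v + (-D)*v^2 + (-(A+B)*b)*u + (0)*v + (c^2-A*B*b^2)"
      by (simp add: Q2_def algebra_simps power2_eq_square)
  qed (use J1 J2 i le q1 q2 in \<open>auto simp: five cong_0_iff intro: dvd_trans\<close>)
qed

lemma case14:
  fixes p D A B a b c d f :: int and l :: nat
  assumes p: "prime p"
    and q1: "p^(8*l+1) dvd Q1 D a b c d f" and q2: "p^(8*l+1) dvd Q2 D A B a b c d f"
    and i: "i < 5" "\<not> p dvd [a,b,c,d,f] ! i"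
    and nd: "\<not> p^(4*l+1) dvd 2*D*a*f"
  shows "has_Qp_point p D A B"
proof -
  obtain e where e: "e \<le> 4*l" "p^e dvd 2*D*a*f" "\<not> p^(e+1) dvd 2*D*a*f"
    using exval[of p "4*l" "2*D*a*f"] nd by blast
  have jq: "jac (0) (0) (0) (-a) (0) (-(A*B)) (0) (-D) (-(A+B)*a) (0) b f = 2*D*a*f"
    unfolding jac_def by (simp add: algebra_simps power2_eq_square)
  have J1: "p^e dvd jac (0) (0) (0) (-a) (0) (-(A*B)) (0) (-D) (-(A+B)*a) (0) b f" using e(2) jq by simp
  have J2: "\<not> p^(e+1) dvd jac (0) (0) (0) (-a) (0) (-(A*B)) (0) (-D) (-(A+B)*a) (0) b f" using e(3) jq by simp
  have le: "p^(2*e+1) dvd p^(8*l+1)" using e(1) by (simp add: le_imp_power_dvd)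
  show ?thesis
  proof (rule lift_gen[OF p, where \<Phi>="\<lambda>u v. [a,u,c,d,v]" and ua="b" and va="f" and e=e and i=i and ka="0" and kb="0" and kc="0" and kd="-a" and ke="0" and kf="c^2-D*d^2" and ma="-(A*B)" and mb="0" and mc="-D" and md="-(A+B)*a" and me="0" and mf="c^2-a^2"])
    show "\<And>u v. Q1 D ([a,u,c,d,v]!0) ([a,u,c,d,v]!1) ([a,u,c,d,v]!2) ([a,u,c,d,v]!3) ([a,u,c,d,v]!4) = 0*u^2 + (0)*u*v + (0)*v^2 + (-a)*u + (0)*v + (c^2-D*d^2)"
      by (simp add: Q1_def algebra_simps power2_eq_square)
    show "\<And>u v. Q2 D A B ([a,u,c,d,v]!0) ([a,u,c,d,v]!1) ([a,u,c,d,v]!2) ([a,u,c,d,v]!3) ([a,u,c,d,v]!4) = (-(A*B))*u^2 + (0)*u*v + (-D)*v^2 + (-(A+B)*a)*u + (0)*v + (c^2-a^2)"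
      by (simp add: Q2_def algebra_simps power2_eq_square)
  qed (use J1 J2 i le q1 q2 in \<open>auto simp: five cong_0_iff intro: dvd_trans\<close>)
qed

lemma cong_dvd_iff2: "[x' = x] (mod M) \<Longrightarrow> (k::int) dvd M \<Longrightarrow> k dvd x' \<longleftrightarrow> k dvd x"
  using cong_dvd_iff cong_dvd_modulus by blast

theorem lemma2p4:
  fixes D p A B :: int and l :: nat
  assumes "\<not> (\<exists>k. D = k^2)"
    and "prime p" and "p \<noteq> 2" and "p dvd D" and "\<not> p^2 dvd D"
    and "l \<ge> 1"
    and "\<not> p^(l+1) dvd A" and "\<not> p^(l+1) dvd B" and "\<not> p^(l+1) dvd (A - B)"
    and "\<not> p^(l+1) dvd G A B"
  shows "has_Qp_point p D A B \<longleftrightarrow> (A mod p^(8*l+1), B mod p^(8*l+1)) \<in> R_set D p l"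
proof -
  note p = assms(2)
  define M where "M = p^(8*l+1)"
  have p0: "p > 0" using p prime_gt_0_int by blast
  have M0: "M > 0" unfolding M_def using p0 by simp
  have dM: "p^(l+1) dvd M" unfolding M_def by (simp add: le_imp_power_dvd)
  have cA: "[A mod M = A] (mod M)" and cB: "[B mod M = B] (mod M)" by simp_all
  have cAB: "[A mod M - B mod M = A - B] (mod M)" using cA cB by (rule cong_diff)
  have cG: "[G (A mod M) (B mod M) = G A B] (mod M)" using cA cB by (rule G_cong)
  have R: "(A mod M, B mod M) \<in> R_set D p l \<longleftrightarrow>
     (\<exists>t0 t1 t2 t3 t4. \<not> (p dvd t0 \<and> p dvd t1 \<and> p dvd t2 \<and> p dvd t3 \<and> p dvd t4) \<and>
           [Q1 D t0 t1 t2 t3 t4 = 0] (mod M) \<and> [Q2 D (A mod M) (B mod M) t0 t1 t2 t3 t4 = 0] (mod M))"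
  proof -
    have "\<not> p^(l+1) dvd A mod M" using cong_dvd_iff2[OF cA dM] assms(7) by simp
    moreover have "\<not> p^(l+1) dvd B mod M" using cong_dvd_iff2[OF cB dM] assms(8) by simp
    moreover have "\<not> p^(l+1) dvd (A mod M - B mod M)" using cong_dvd_iff2[OF cAB dM] assms(9) by simp
    moreover have "\<not> p^(l+1) dvd G (A mod M) (B mod M)" using cong_dvd_iff2[OF cG dM] assms(10) by simp
    moreover have "0 \<le> A mod M" "A mod M < M" "0 \<le> B mod M" "B mod M < M" using M0 by simp_all
    ultimately show ?thesis unfolding R_set_def Let_def M_def[symmetric] mem_Collect_eq prod.case by blast
  qed
  have Q2c: "[Q2 D (A mod M) (B mod M) t0 t1 t2 t3 t4 = Q2 D A B t0 t1 t2 t3 t4] (mod M)" for t0 t1 t2 t3 t4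
    using Q2_cong[OF cA cB cong_refl cong_refl cong_refl cong_refl cong_refl] by blast
  have Q2e: "[Q2 D (A mod M) (B mod M) t0 t1 t2 t3 t4 = 0] (mod M) \<longleftrightarrow> [Q2 D A B t0 t1 t2 t3 t4 = 0] (mod M)" for t0 t1 t2 t3 t4
    using Q2c[of t0 t1 t2 t3 t4] cong_sym cong_trans by metis
  have R2: "(A mod M, B mod M) \<in> R_set D p l \<longleftrightarrow>
     (\<exists>t0 t1 t2 t3 t4. \<not> (p dvd t0 \<and> p dvd t1 \<and> p dvd t2 \<and> p dvd t3 \<and> p dvd t4) \<and>
           [Q1 D t0 t1 t2 t3 t4 = 0] (mod M) \<and> [Q2 D A B t0 t1 t2 t3 t4 = 0] (mod M))"
    unfolding R Q2e ..
  have "has_Qp_point p D A B \<longleftrightarrow> (A mod M, B mod M) \<in> R_set D p l"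
  proof
    assume h: "has_Qp_point p D A B"
    have "\<exists>t0 t1 t2 t3 t4. \<not> (p dvd t0 \<and> p dvd t1 \<and> p dvd t2 \<and> p dvd t3 \<and> p dvd t4) \<and>
           [Q1 D t0 t1 t2 t3 t4 = 0] (mod M) \<and> [Q2 D A B t0 t1 t2 t3 t4 = 0] (mod M)"
      unfolding M_def by (rule forward[OF p h])
    then show "(A mod M, B mod M) \<in> R_set D p l" using R2 by blast
  next
    assume "(A mod M, B mod M) \<in> R_set D p l"
    then have "\<exists>t0 t1 t2 t3 t4. \<not> (p dvd t0 \<and> p dvd t1 \<and> p dvd t2 \<and> p dvd t3 \<and> p dvd t4) \<and>
           [Q1 D t0 t1 t2 t3 t4 = 0] (mod M) \<and> [Q2 D A B t0 t1 t2 t3 t4 = 0] (mod M)" by (rule iffD1[OF R2])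
    then obtain a b c d f where prim: "\<not> (p dvd a \<and> p dvd b \<and> p dvd c \<and> p dvd d \<and> p dvd f)"
      and q1': "[Q1 D a b c d f = 0] (mod M)" and q2': "[Q2 D A B a b c d f = 0] (mod M)"
      by blast
    have q1: "p^(8*l+1) dvd Q1 D a b c d f" using q1' unfolding M_def cong_0_iff .
    have q2: "p^(8*l+1) dvd Q2 D A B a b c d f" using q2' unfolding M_def cong_0_iff .
    obtain i where i: "i < 5" "\<not> p dvd [a,b,c,d,f] ! i"
    proof -
      have "\<not> p dvd [a,b,c,d,f]!0 \<or> \<not> p dvd [a,b,c,d,f]!1 \<or> \<not> p dvd [a,b,c,d,f]!2 \<or> \<not> p dvd [a,b,c,d,f]!3 \<or> \<not> p dvd [a,b,c,d,f]!4"
        using prim by simp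
      then show ?thesis using that[of 0] that[of 1] that[of 2] that[of 3] that[of 4] by fastforce
    qed
    from key[OF p assms(3,4,5,6,7,8,9,10) prim q1 q2] show "has_Qp_point p D A B"
    proof (elim disjE)
      assume "\<not> p ^ (4 * l + 1) dvd 2 * (A * B * b\<^sup>2 - a\<^sup>2)"
      then show ?thesis using case01[OF p q1 q2 i] by blast
    next
      assume "\<not> p ^ (4 * l + 1) dvd 2 * c * (2 * a + (A + B - 1) * b)"
      then show ?thesis using case02[OF p q1 q2 i] by blast
    next
      assume "\<not> p ^ (4 * l + 1) dvd 2 * c * ((A + B - 1) * a + 2 * A * B * b)"
      then show ?thesis using case12[OF p q1 q2 i] by blast
    next
      assume "\<not> p ^ (4 * l + 1) dvd 4 * D * c * d"
      then show ?thesis using case23[OF p q1 q2 i] by blast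
    next
      assume "\<not> p ^ (4 * l + 1) dvd 4 * D * c * f"
      then show ?thesis using case24[OF p q1 q2 i] by blast
    next
      assume "\<not> p ^ (4 * l + 1) dvd 2 * D * b * f"
      then show ?thesis using case04[OF p q1 q2 i] by blast
    next
      assume "\<not> p ^ (4 * l + 1) dvd 2 * D * a * f"
      then show ?thesis using case14[OF p q1 q2 i] by blast
    qed
  qed
  then show ?thesis unfolding M_def .
qed

end
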